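(* Let $\mathcal D$ be universal and let $m\in\mathcal D$ with $m>0$. Suppose the set $S=\{r\in\mathcal D: r^{+}>m+r\}$ is nonempty. Then $s:=\min S$ is a jump number, i.e. $s^{+}>2s$.
   Context: $\mathcal D$ denotes a finite subset of $\mathbb R_{\ge0}$ with $0\in\mathcal D$; it is universal if there is a countable homogeneous metric space with distance set exactly $\mathcal D$ into which every finite metric space with distances in $\mathcal D$ embeds isometrically (homogeneous: every isometry between finite subspaces extends to an isometry of the space onto itself). For $r\in\mathcal D$ with $r<\max\mathcal D$, $r^{+}$ is the smallest element of $\mathcal D$ larger than $r$; for $r=\max\mathcal D$, $r^{+}=r$. *)

theory Defs
  imports Complex_Main "HOL-Library.Countable_Set"
begin

text \<open>Carriers live in type nat: every countable (in particular every finite) metric space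
  is isometric to one whose carrier is a subset of nat.\<close>

definition metric_on :: "'a set \<Rightarrow> ('a \<Rightarrow> 'a \<Rightarrow> real) \<Rightarrow> bool" where
  "metric_on X d \<longleftrightarrow>
     (\<forall>x\<in>X. \<forall>y\<in>X. 0 \<le> d x y \<and> (d x y = 0 \<longleftrightarrow> x = y) \<and> d x y = d y x) \<and>
     (\<forall>x\<in>X. \<forall>y\<in>X. \<forall>z\<in>X. d x z \<le> d x y + d y z)"

definition dist_set :: "'a set \<Rightarrow> ('a \<Rightarrow> 'a \<Rightarrow> real) \<Rightarrow> real set" where
  "dist_set X d = {d x y | x y. x \<in> X \<and> y \<in> X}"

definition homogeneous_on :: "'a set \<Rightarrow> ('a \<Rightarrow> 'a \<Rightarrow> real) \<Rightarrow> bool" where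
  "homogeneous_on X d \<longleftrightarrow>
     (\<forall>A f. finite A \<and> A \<subseteq> X \<and> inj_on f A \<and> f ` A \<subseteq> X \<and>
            (\<forall>x\<in>A. \<forall>y\<in>A. d (f x) (f y) = d x y) \<longrightarrow>
        (\<exists>g. bij_betw g X X \<and> (\<forall>x\<in>X. \<forall>y\<in>X. d (g x) (g y) = d x y) \<and>
             (\<forall>x\<in>A. g x = f x)))"

definition universal_dset :: "real set \<Rightarrow> bool" where
  "universal_dset D \<longleftrightarrow>
     finite D \<and> 0 \<in> D \<and> (\<forall>r\<in>D. 0 \<le> r) \<and>
     (\<exists>(X :: nat set) d. countable X \<and> metric_on X d \<and> dist_set X d = D \<and> homogeneous_on X d \<and>
        (\<forall>(F :: nat set) e. finite F \<and> metric_on F e \<and> dist_set F e \<subseteq> D \<longrightarrow>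
           (\<exists>f. inj_on f F \<and> f ` F \<subseteq> X \<and> (\<forall>x\<in>F. \<forall>y\<in>F. d (f x) (f y) = e x y))))"

text \<open>r^+ : the next element of D above r, or r itself if r is the maximum.\<close>
definition dsucc :: "real set \<Rightarrow> real \<Rightarrow> real" where
  "dsucc D r = (if r < Max D then Min {x \<in> D. r < x} else r)"

end

theory Submission
  imports Defs
begin

definition tri :: "real \<Rightarrow> real \<Rightarrow> real \<Rightarrow> nat \<Rightarrow> nat \<Rightarrow> real" where
  "tri u a b x y = (if x = y then 0 else if x + y = 1 then u else if x + y = 2 then a else b)"

lemma tri_metric:
  assumes "0<u" "0<a" "0<b" "u \<le> a+b" "a \<le> u+b" "b \<le> u+a"
  shows "metric_on {0::nat,1,2} (tri u a b)"
  using assms unfolding metric_on_def tri_def by auto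

lemma tri_dist: "dist_set {0::nat,1,2} (tri u a b) \<subseteq> {0,u,a,b}"
  unfolding dist_set_def tri_def by auto

lemma fourval:
  assumes U: "universal_dset D"
    and D: "u \<in> D" "a \<in> D" "b \<in> D" "c \<in> D" "d \<in> D"
    and pos: "0<u" "0<a" "0<b" "0<c" "0<d"
    and t1: "u \<le> a+b" "a \<le> u+b" "b \<le> u+a"
    and t2: "u \<le> c+d" "c \<le> u+d" "d \<le> u+c"
  shows "\<exists>v\<in>D. v \<le> a + c \<and> b - d \<le> v"
proof -
  from U have "0 \<in> D" unfolding universal_dset_def by auto
  from U have E: "\<exists>(X :: nat set) dd. countable X \<and> metric_on X dd \<and> dist_set X dd = D \<and> homogeneous_on X dd \<and>
        (\<forall>(F :: nat set) e. finite F \<and> metric_on F e \<and> dist_set F e \<subseteq> D \<longrightarrow>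
           (\<exists>f. inj_on f F \<and> f ` F \<subseteq> X \<and> (\<forall>x\<in>F. \<forall>y\<in>F. dd (f x) (f y) = e x y)))"
    unfolding universal_dset_def by (elim conjE)
  from E obtain X :: "nat set" and dd where H: "countable X \<and> metric_on X dd \<and> dist_set X dd = D \<and> homogeneous_on X dd \<and>
        (\<forall>(F :: nat set) e. finite F \<and> metric_on F e \<and> dist_set F e \<subseteq> D \<longrightarrow>
           (\<exists>f. inj_on f F \<and> f ` F \<subseteq> X \<and> (\<forall>x\<in>F. \<forall>y\<in>F. dd (f x) (f y) = e x y)))"
    by (elim exE) (erule that)
  have mX: "metric_on X dd" using H by (elim conjE)
  have dsX: "dist_set X dd = D" using H by (elim conjE)
  have hX: "homogeneous_on X dd" using H by (elim conjE)
  have unA: "\<forall>(F :: nat set) e. finite F \<and> metric_on F e \<and> dist_set F e \<subseteq> D \<longrightarrow>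
           (\<exists>f. inj_on f F \<and> f ` F \<subseteq> X \<and> (\<forall>x\<in>F. \<forall>y\<in>F. dd (f x) (f y) = e x y))"
    using H by (elim conjE)
  have un: "\<And>(F :: nat set) e. finite F \<Longrightarrow> metric_on F e \<Longrightarrow> dist_set F e \<subseteq> D \<Longrightarrow>
           (\<exists>f. inj_on f F \<and> f ` F \<subseteq> X \<and> (\<forall>x\<in>F. \<forall>y\<in>F. dd (f x) (f y) = e x y))"
  proof -
    fix F :: "nat set" and e
    assume a: "finite F" "metric_on F e" "dist_set F e \<subseteq> D"
    have c: "finite F \<and> metric_on F e \<and> dist_set F e \<subseteq> D" using a by (intro conjI)
    show "\<exists>f. inj_on f F \<and> f ` F \<subseteq> X \<and> (\<forall>x\<in>F. \<forall>y\<in>F. dd (f x) (f y) = e x y)"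
      by (rule mp[OF spec[OF spec[OF unA, of F], of e] c])
  qed
  have s1: "dist_set {0::nat,1,2} (tri u a b) \<subseteq> D"
    using tri_dist[of u a b] D \<open>0 \<in> D\<close> by auto
  have s2: "dist_set {0::nat,1,2} (tri u c d) \<subseteq> D"
    using tri_dist[of u c d] D \<open>0 \<in> D\<close> by auto
  obtain f1 where f1: "inj_on f1 {0::nat,1,2}" "f1 ` {0,1,2} \<subseteq> X"
    "\<forall>x\<in>{0,1,2}. \<forall>y\<in>{0,1,2}. dd (f1 x) (f1 y) = tri u a b x y"
    using un[OF _ tri_metric[OF pos(1,2,3) t1] s1] by auto
  obtain f2 where f2: "inj_on f2 {0::nat,1,2}" "f2 ` {0,1,2} \<subseteq> X"
    "\<forall>x\<in>{0,1,2}. \<forall>y\<in>{0,1,2}. dd (f2 x) (f2 y) = tri u c d x y"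
    using un[OF _ tri_metric[OF pos(1,4,5) t2] s2] by auto
  have ne1: "f1 0 \<noteq> f1 1" using f1(1) by (auto dest: inj_onD)
  have ne2: "f2 0 \<noteq> f2 1" using f2(1) by (auto dest: inj_onD)
  have inX: "f1 0 \<in> X" "f1 1 \<in> X" "f1 2 \<in> X" "f2 0 \<in> X" "f2 1 \<in> X" "f2 2 \<in> X"
    using f1(2) f2(2) by auto
  have d0: "\<And>x. x \<in> X \<Longrightarrow> dd x x = 0" using mX unfolding metric_on_def by auto
  define A where "A = {f2 0, f2 1}"
  define f where "f = (\<lambda>z. if z = f2 0 then f1 0 else f1 1)"
  have f1d: "dd (f1 0) (f1 1) = u" "dd (f1 1) (f1 0) = u" "dd (f1 2) (f1 0) = a" "dd (f1 2) (f1 1) = b"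
    using f1(3) by (auto simp: tri_def)
  have f2d: "dd (f2 0) (f2 1) = u" "dd (f2 1) (f2 0) = u" "dd (f2 0) (f2 2) = c" "dd (f2 2) (f2 1) = d"
    using f2(3) by (auto simp: tri_def)
  have h1: "finite A" "A \<subseteq> X" unfolding A_def using inX by auto
  have h2: "inj_on f A" unfolding A_def f_def inj_on_def using ne1 ne2 by auto
  have h3: "f ` A \<subseteq> X" unfolding A_def f_def using inX by auto
  have h4: "\<forall>x\<in>A. \<forall>y\<in>A. dd (f x) (f y) = dd x y"
  proof (intro ballI)
    fix x y assume "x \<in> A" "y \<in> A"
    then consider "x = f2 0" "y = f2 0" | "x = f2 0" "y = f2 1" | "x = f2 1" "y = f2 0" | "x = f2 1" "y = f2 1"
      unfolding A_def by blast
    then show "dd (f x) (f y) = dd x y"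
    proof cases
      case 1 thus ?thesis using d0 inX unfolding f_def by simp
    next
      case 2 thus ?thesis using ne2 f1d f2d unfolding f_def by simp
    next
      case 3 thus ?thesis using ne2 f1d f2d unfolding f_def by simp
    next
      case 4 thus ?thesis using ne2 d0 inX unfolding f_def by simp
    qed
  qed
  have "finite A \<and> A \<subseteq> X \<and> inj_on f A \<and> f ` A \<subseteq> X \<and> (\<forall>x\<in>A. \<forall>y\<in>A. dd (f x) (f y) = dd x y)"
    using h1 h2 h3 h4 by (intro conjI)
  then obtain g where g: "\<forall>x\<in>X. \<forall>y\<in>X. dd (g x) (g y) = dd x y" "\<forall>x\<in>A. g x = f x"
    "bij_betw g X X"
    using hX unfolding homogeneous_on_def by (elim allE impE) auto
  have g0: "g (f2 0) = f1 0" and g1: "g (f2 1) = f1 1" using g(2) ne2 unfolding A_def f_def by auto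
  have gX: "g (f2 2) \<in> X" using g(3) inX by (auto simp: bij_betw_def)
  define v where "v = dd (f1 2) (g (f2 2))"
  have vD: "v \<in> D" using dsX inX gX unfolding v_def dist_set_def by auto
  have tr: "\<And>x y z. x\<in>X \<Longrightarrow> y\<in>X \<Longrightarrow> z\<in>X \<Longrightarrow> dd x z \<le> dd x y + dd y z"
    using mX unfolding metric_on_def by blast
  have "v \<le> dd (f1 2) (f1 0) + dd (f1 0) (g (f2 2))"
    unfolding v_def using tr inX gX by blast
  also have "dd (f1 0) (g (f2 2)) = c" using g(1) inX g0 f2d by metis
  finally have va: "v \<le> a + c" using f1d by simp
  have "dd (f1 2) (f1 1) \<le> v + dd (g (f2 2)) (f1 1)"
    unfolding v_def using tr inX gX by blast
  also have "dd (g (f2 2)) (f1 1) = d" using g(1) inX g1 f2d by metis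
  finally have vb: "b - d \<le> v" using f1d by simp
  show ?thesis using vD va vb by auto
qed

theorem lemma3p1:
  fixes D :: "real set" and m :: real
  assumes "universal_dset D"
    and "m \<in> D" and "m > 0"
    and "{r \<in> D. dsucc D r > m + r} \<noteq> {}"
  shows "dsucc D (Min {r \<in> D. dsucc D r > m + r}) > 2 * Min {r \<in> D. dsucc D r > m + r}"
proof (rule ccontr)
  define S where "S = {r \<in> D. dsucc D r > m + r}"
  define s where "s = Min S"
  assume "\<not> ?thesis"
  hence le: "dsucc D s \<le> 2 * s" unfolding s_def S_def by simp
  have fin: "finite D" and z: "0 \<in> D" and nn: "\<forall>r\<in>D. 0 \<le> r"
    using assms(1) unfolding universal_dset_def by auto
  have finS: "finite S" using fin unfolding S_def by auto
  have neS: "S \<noteq> {}" using assms(4) unfolding S_def .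
  have sS: "s \<in> S" unfolding s_def by (rule Min_in[OF finS neS])
  have minS: "\<And>r. r \<in> D \<Longrightarrow> r < s \<Longrightarrow> dsucc D r \<le> m + r"
  proof -
    fix r assume "r \<in> D" "r < s"
    show "dsucc D r \<le> m + r"
    proof (rule ccontr)
      assume "\<not> ?thesis" hence "r \<in> S" using \<open>r \<in> D\<close> unfolding S_def by auto
      hence "s \<le> r" using finS unfolding s_def by auto
      thus False using \<open>r < s\<close> by simp
    qed
  qed
  have sD: "s \<in> D" and sg: "dsucc D s > m + s" using sS unfolding S_def by auto
  have "s < Max D"
  proof (rule ccontr)
    assume "\<not> s < Max D" thus False using sg assms(3) unfolding dsucc_def by auto
  qed
  define sp where "sp = dsucc D s"
  have spdef: "sp = Min {x \<in> D. s < x}" using \<open>s < Max D\<close> unfolding sp_def dsucc_def by simp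
  have ne1: "{x \<in> D. s < x} \<noteq> {}" proof -
    have "D \<noteq> {}" using sD by auto
    hence "Max D \<in> D" using fin by simp
    thus ?thesis using \<open>s < Max D\<close> by auto
  qed
  have spD: "sp \<in> D" and ssp: "s < sp" using Min_in[OF _ ne1] fin unfolding spdef by auto
  have gap: "\<And>x. x \<in> D \<Longrightarrow> s < x \<Longrightarrow> sp \<le> x" using fin unfolding spdef by auto
  have s0: "s \<ge> 0" using nn sD by auto
  have "s \<noteq> 0"
  proof
    assume "s = 0"
    hence "sp \<le> m" using gap assms(2,3) by auto
    thus False using sg \<open>s = 0\<close> sp_def by simp
  qed
  hence spos: "s > 0" using s0 by simp
  define t where "t = sp - s"
  have tm: "t > m" using sg unfolding t_def sp_def by simp
  have ts: "t \<le> s" using le unfolding t_def sp_def by simp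
  define u where "u = Min {x \<in> D. t \<le> x}"
  have neu: "{x \<in> D. t \<le> x} \<noteq> {}" using sD ts by auto
  have uD: "u \<in> D" and tu: "t \<le> u" using Min_in[OF _ neu] fin unfolding u_def by auto
  have us: "u \<le> s" using sD ts fin unfolding u_def by auto
  have umin: "\<And>x. x \<in> D \<Longrightarrow> t \<le> x \<Longrightarrow> u \<le> x" using fin unfolding u_def by auto
  define p where "p = Max {x \<in> D. x < t}"
  have nep: "{x \<in> D. x < t} \<noteq> {}" using z tm assms(3) by auto
  have pD: "p \<in> D" and pt: "p < t" using Max_in[OF _ nep] fin unfolding p_def by auto
  have pmax: "\<And>x. x \<in> D \<Longrightarrow> x < t \<Longrightarrow> x \<le> p" using fin unfolding p_def by auto
  have ps: "p < s" using pt ts by simp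
  have "s \<le> Max D" using fin sD by auto
  hence pM: "p < Max D" using ps by simp
  have "dsucc D p = Min {x \<in> D. p < x}" using pM unfolding dsucc_def by simp
  also have "\<dots> = u"
  proof (rule Min_eqI)
    show "finite {x \<in> D. p < x}" using fin by simp
    show "u \<in> {x \<in> D. p < x}" using uD tu pt by auto
    fix y assume "y \<in> {x \<in> D. p < x}"
    hence "y \<in> D" "p < y" by auto
    hence "t \<le> y" using pmax[of y] by linarith
    thus "u \<le> y" using umin \<open>y \<in> D\<close> by simp
  qed
  finally have "u \<le> m + p" using minS[OF pD ps] by simp
  have ppos: "p > 0"
  proof -
    have "p \<ge> 0" using nn pD by auto
    moreover have "p \<noteq> 0" using \<open>u \<le> m + p\<close> tu tm by auto
    ultimately show ?thesis by simp
  qed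
  have upos: "0 < u" using tu tm assms(3) by simp
  have sppos: "0 < sp" using ssp spos by simp
  have c1: "u \<le> s + sp" using us sppos by simp
  have c2: "s \<le> u + sp" using ssp upos by simp
  have c3: "sp \<le> u + s" using tu unfolding t_def by simp
  have c4: "u \<le> p + m" using \<open>u \<le> m + p\<close> by simp
  have c5: "p \<le> u + m" using pt tu assms(3) by simp
  have c6: "m \<le> u + p" using tm tu ppos by simp
  obtain v where v: "v \<in> D" "v \<le> s + p" "sp - m \<le> v"
    using fourval[OF assms(1) uD sD spD pD assms(2) upos spos sppos ppos assms(3) c1 c2 c3 c4 c5 c6]
    by blast
  have "s < v" using v(3) sg sp_def by simp
  hence "sp \<le> v" using gap v(1) by simp
  thus False using v(2) pt t_def by simp
qed

end
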